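(* Let $\delta>0$, $m>64\pi^2$, $\kappa>0$, $\mu^\star>0$, and let $\varepsilon\in(0,1)$, $\ell>0$, $\gamma>0$ satisfy: $\ell\ge\delta$; $-2^5\xi^2+(\mu^\star\varepsilon+6\ell)\xi-(\gamma+1)\ell\le0$ for all $\xi\in\mathbb{R}$; $2\gamma^2-3\ell\ge0$; $e^\varepsilon<\frac{1+2\kappa}{1+\kappa}$; $e^{(\gamma+1)\varepsilon}(1+3\varepsilon^3)<\frac{m}{64\pi^2}$; and $e^{(\ell-\delta)t}(1+(\varepsilon-\ell t)^3)\ge1+\varepsilon^3$ for all $t\in(0,\varepsilon/\ell)$. Put $\tau(t)=\varepsilon-\ell t$, $a(t)=2^5e^{(\gamma+1)\tau}$, $b(t)=8e^{\tau}$ and $$\underline U(s,t):=\frac{a(s^{3/2}+3\tau^3s)}{(s^{1/2}+\tau^3)^3},\qquad \underline W(s,t):=\frac{bs}{s^{1/2}+\tau^3},\qquad(s,t)\in[0,1]\times[0,\varepsilon/\ell).$$ Then for each $t\in[0,\varepsilon/\ell)$ the map $s\mapsto\underline W(s,t)$ on $[0,1]$ is nonnegative, increasing and concave; $\underline W(0,t)=0$ for all $t\in[0,\varepsilon/\ell)$; $$\sup_{t\in(0,\varepsilon/\ell)}\underline W(1,t)<8\cdot\frac{1+2\kappa}{1+\kappa};$$ and $\mathcal Q(\underline U,\underline W)\le0$ for all $(s,t)\in(0,1)\times(0,\varepsilon/\ell)$.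
   Context: For functions $\phi,\psi$ the operator $\mathcal Q$ is $\mathcal Q(\phi,\psi):=\psi_t-16s^{3/2}\psi_{ss}+\delta\psi-\phi$. *)

theory Defs
  imports "HOL-Analysis.Analysis"
begin

definition Qop :: "real \<Rightarrow> (real \<Rightarrow> real \<Rightarrow> real) \<Rightarrow> (real \<Rightarrow> real \<Rightarrow> real) \<Rightarrow> real \<Rightarrow> real \<Rightarrow> real" where
  "Qop \<delta> \<phi> \<psi> s t =
     deriv (\<lambda>t'. \<psi> s t') t - 16 * s powr (3/2) * deriv (deriv (\<lambda>s'. \<psi> s' t)) s
     + \<delta> * \<psi> s t - \<phi> s t"

definition tau :: "real \<Rightarrow> real \<Rightarrow> real \<Rightarrow> real" where
  "tau \<epsilon> l t = \<epsilon> - l * t"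

definition acoef :: "real \<Rightarrow> real \<Rightarrow> real \<Rightarrow> real \<Rightarrow> real" where
  "acoef \<epsilon> l \<gamma> t = 2^5 * exp ((\<gamma> + 1) * tau \<epsilon> l t)"

definition bcoef :: "real \<Rightarrow> real \<Rightarrow> real \<Rightarrow> real" where
  "bcoef \<epsilon> l t = 8 * exp (tau \<epsilon> l t)"

definition Ulow :: "real \<Rightarrow> real \<Rightarrow> real \<Rightarrow> real \<Rightarrow> real \<Rightarrow> real" where
  "Ulow \<epsilon> l \<gamma> s t =
     acoef \<epsilon> l \<gamma> t * (s powr (3/2) + 3 * (tau \<epsilon> l t)^3 * s) / (sqrt s + (tau \<epsilon> l t)^3)^3"

definition Wlow :: "real \<Rightarrow> real \<Rightarrow> real \<Rightarrow> real \<Rightarrow> real" where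
  "Wlow \<epsilon> l s t = bcoef \<epsilon> l t * s / (sqrt s + (tau \<epsilon> l t)^3)"

end

theory Submission
  imports Defs
begin

lemma W_deriv_pos:
  fixes B c s :: real assumes "c > 0" "s > 0"
  shows "((\<lambda>s. B * s / (sqrt s + c)) has_real_derivative
            (B/(2*(sqrt s + c)) + B*c/(2*(sqrt s + c)^2))) (at s)"
proof -
  have sp: "sqrt s > 0" using assms by simp
  have np: "sqrt s + c \<noteq> 0" using sp assms by linarith
  have "((\<lambda>s. B * s / (sqrt s + c)) has_real_derivative
     (B*(sqrt s + c) - B * s * (inverse (sqrt s)/2))/((sqrt s + c)*(sqrt s + c))) (at s)"
    using assms sp np
    by (auto intro!: derivative_eq_intros DERIV_real_sqrt)
  moreover have "(B*(sqrt s + c) - B * s * (inverse (sqrt s)/2))/((sqrt s + c)*(sqrt s + c))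
      = B/(2*(sqrt s + c)) + B*c/(2*(sqrt s + c)^2)"
  proof -
    define x where "x = sqrt s"
    have sx: "s = x^2" using assms by (simp add: x_def)
    have xp: "x > 0" "x + c \<noteq> 0" using sp np by (auto simp: x_def)
    show ?thesis unfolding x_def[symmetric] sx using xp
      apply (simp add: divide_simps power2_eq_square)
      apply (simp add: algebra_simps)
      done
  qed
  ultimately show ?thesis by simp
qed

lemma W_deriv_zero:
  fixes B c :: real assumes "c > 0"
  shows "((\<lambda>s. B * s / (sqrt s + c)) has_real_derivative
            (B/(2*(sqrt 0 + c)) + B*c/(2*(sqrt 0 + c)^2))) (at 0)"
proof -
  have e: "B/(2*(sqrt 0 + c)) + B*c/(2*(sqrt 0 + c)^2) = B/c" using assms
    by (simp add: field_simps power2_eq_square)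
  have "((\<lambda>h. B/(sqrt h + c)) \<longlongrightarrow> B/(sqrt 0 + c)) (at 0)"
    using assms by (intro tendsto_intros) (auto intro: tendsto_eq_intros)
  then have "((\<lambda>h. B/(sqrt h + c)) \<longlongrightarrow> B/c) (at 0)" by simp
  then have "((\<lambda>h. (B * h / (sqrt h + c) - B * 0 / (sqrt 0 + c)) / h) \<longlongrightarrow> B/c) (at 0)"
  proof (rule Lim_transform_within[where d=1])
    show "0 < (1::real)" by simp
    fix h :: real assume "0 < dist h 0" "dist h 0 < 1"
    then show "B/(sqrt h + c) = (B * h / (sqrt h + c) - B * 0 / (sqrt 0 + c)) / h" by simp
  qed
  then show ?thesis unfolding e
    by (simp add: has_field_derivative_iff)
qed

definition W1f :: "real \<Rightarrow> real \<Rightarrow> real \<Rightarrow> real" where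
  "W1f B c s = B / (2 * (sqrt s + c)) + B * c / (2 * (sqrt s + c)^2)"

lemma W_deriv:
  fixes B c s :: real assumes "c > 0" "s \<ge> 0"
  shows "((\<lambda>s. B * s / (sqrt s + c)) has_real_derivative W1f B c s) (at s)"
proof (cases "s = 0")
  case True then show ?thesis using W_deriv_zero[OF assms(1), of B] by (simp add: W1f_def)
next
  case False then show ?thesis using W_deriv_pos[OF assms(1), of s B] assms by (simp add: W1f_def)
qed

lemma W1f_antimono:
  fixes B c x y :: real assumes "c > 0" "B > 0" "0 \<le> x" "x \<le> y"
  shows "W1f B c y \<le> W1f B c x"
proof -
  have a: "sqrt x + c \<le> sqrt y + c" using assms by simp
  have p: "0 < sqrt x + c" using assms by (simp add: add_nonneg_pos)
  have b: "(sqrt x + c)^2 \<le> (sqrt y + c)^2" using a p by (simp add: power_mono)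
  have p2: "0 < (sqrt x + c)^2" using p by simp
  have py: "0 < sqrt y + c" using a p by linarith
  have "B / (2 * (sqrt y + c)) \<le> B / (2 * (sqrt x + c))"
    using a p py assms by (intro divide_left_mono mult_pos_pos) auto
  moreover have "B * c / (2 * (sqrt y + c)^2) \<le> B * c / (2 * (sqrt x + c)^2)"
    using b p2 py assms by (intro divide_left_mono mult_pos_pos) auto
  ultimately show ?thesis by (simp add: W1f_def)
qed

lemma W1f_pos:
  fixes B c x :: real assumes "c > 0" "B > 0" "0 \<le> x"
  shows "W1f B c x > 0"
proof -
  have p: "0 < sqrt x + c" using assms by (simp add: add_nonneg_pos)
  have "0 < B / (2 * (sqrt x + c))" using p assms by simp
  moreover have "0 < B * c / (2 * (sqrt x + c)^2)" using p assms by simp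
  ultimately show ?thesis unfolding W1f_def by simp
qed

lemma W_shape:
  fixes B c :: real assumes "c > 0" "B > 0"
  shows "(\<forall>s\<in>{0..1}. B * s / (sqrt s + c) \<ge> 0)
       \<and> strict_mono_on {0..1} (\<lambda>s. B * s / (sqrt s + c))
       \<and> concave_on {0..1} (\<lambda>s. B * s / (sqrt s + c))"
proof (intro conjI)
  show "\<forall>s\<in>{0..1}. B * s / (sqrt s + c) \<ge> 0"
    using assms by (auto intro!: divide_nonneg_pos add_nonneg_pos)
  show "strict_mono_on {0..1} (\<lambda>s. B * s / (sqrt s + c))"
  proof (rule strict_mono_onI)
    fix r s :: real assume "r \<in> {0..1}" "s \<in> {0..1}" "r < s"
    then show "B * r / (sqrt r + c) < B * s / (sqrt s + c)"
      using assms by (intro DERIV_pos_imp_increasing[where f="\<lambda>s. B * s / (sqrt s + c)"])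
        (auto intro!: exI[where x="W1f B c _"] W_deriv W1f_pos)
  qed
  show "concave_on {0..1} (\<lambda>s. B * s / (sqrt s + c))"
    unfolding concave_on_def
  proof (rule convex_on_realI[where f'="\<lambda>s. - W1f B c s"])
    show "connected {0..1::real}" by simp
    fix x assume "x \<in> {0..1::real}"
    then show "((\<lambda>s. - (B * s / (sqrt s + c))) has_real_derivative - W1f B c x) (at x)"
      using assms W_deriv[OF assms(1), of x B] by (auto intro: DERIV_minus)
  next
    fix x y :: real assume "x \<in> {0..1}" "y \<in> {0..1}" "x \<le> y"
    then show "- W1f B c x \<le> - W1f B c y" using W1f_antimono[OF assms, of x y] by simp
  qed
qed
definition W2f :: "real \<Rightarrow> real \<Rightarrow> real \<Rightarrow> real" where
  "W2f B c s = - B / (4 * sqrt s * (sqrt s + c)^2) - B * c / (2 * sqrt s * (sqrt s + c)^3)"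


lemma W2_alg:
  fixes B c x :: real assumes "x > 0" "x + c \<noteq> 0"
  shows "- (B * inverse x / ((2 * x + 2 * c) * (2 * x + 2 * c))) -
        B * (c * (inverse x * (x + c))) / (2 * (x + c) ^ 4)
      = - B / (4 * x * (x + c)^2) - B * c / (2 * x * (x + c)^3)"
proof -
  define y where "y = x + c"
  have y: "y \<noteq> 0" using assms by (simp add: y_def)
  have e1: "2 * x + 2 * c = 2 * y" by (simp add: y_def)
  have t1: "B * inverse x / ((2 * y) * (2 * y)) = B / (4 * x * y^2)"
    using y assms by (simp add: field_simps power2_eq_square)
  have t2: "B * (c * (inverse x * y)) / (2 * y ^ 4) = B * c / (2 * x * y^3)"
    using y assms by (simp add: field_simps power4_eq_xxxx power3_eq_cube)
  show ?thesis unfolding e1 y_def[symmetric] t1 t2 by simp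
qed
lemma W1_deriv:
  fixes B c s :: real assumes "c > 0" "s > 0"
  shows "(W1f B c has_real_derivative W2f B c s) (at s)"
proof -
  have sp: "sqrt s > 0" using assms by simp
  have np: "sqrt s + c \<noteq> 0" using sp assms by linarith
  show ?thesis
    unfolding W1f_def
    using sp np assms
    apply (auto intro!: derivative_eq_intros DERIV_real_sqrt)
    using W2_alg[OF sp np, of B] by (simp add: W2f_def)
qed

lemma deriv2_W:
  fixes B c s :: real assumes "c > 0" "s > 0"
  shows "deriv (deriv (\<lambda>s. B * s / (sqrt s + c))) s = W2f B c s"
proof (rule DERIV_imp_deriv)
  show "(deriv (\<lambda>s. B * s / (sqrt s + c)) has_real_derivative W2f B c s) (at s)"
  proof (rule has_field_derivative_transform_within_open[OF W1_deriv[OF assms], where S="{0<..}"])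
    fix y :: real assume "y \<in> {0<..}"
    then show "W1f B c y = deriv (\<lambda>s. B * s / (sqrt s + c)) y"
      using W_deriv[OF assms(1), of y B] by (simp add: DERIV_imp_deriv)
  qed (use assms in auto)
qed
lemma K_neg:
  fixes x T l \<delta> \<gamma> :: real
  assumes "x > 0" "T > 0" "\<delta> \<le> l" "3 * l \<le> 2 * \<gamma>^2" "\<gamma> > 0"
  shows "(\<delta> - l) * (x + T^3)^2 + 3 * l * T^2 * (x + T^3) + 4 * (1 - exp (\<gamma> * T)) * (x + 3 * T^3) \<le> 0"
proof -
  have c: "T^3 > 0" using assms by simp
  have a: "(\<delta> - l) * (x + T^3)^2 \<le> 0" using assms by (simp add: mult_nonpos_nonneg)
  have b: "3 * l * T^2 * (x + T^3) \<le> 2 * \<gamma>^2 * T^2 * (x + 3 * T^3)"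
  proof -
    have "3 * l * T^2 * (x + T^3) \<le> 2 * \<gamma>^2 * T^2 * (x + T^3)"
      using assms c by (intro mult_right_mono) auto
    also have "\<dots> \<le> 2 * \<gamma>^2 * T^2 * (x + 3 * T^3)"
      using assms c by (intro mult_left_mono) auto
    finally show ?thesis .
  qed
  have g: "1 + \<gamma> * T + (\<gamma> * T)^2 / 2 \<le> exp (\<gamma> * T)"
    using assms by (intro exp_lower_Taylor_quadratic) simp
  have gt: "\<gamma> * T > 0" using assms by simp
  have g1: "(\<gamma> * T)^2 / 2 \<le> exp (\<gamma> * T) - 1" using g gt by linarith
  have g2': "2 * (\<gamma> * T)^2 \<le> 4 * (exp (\<gamma> * T) - 1)" using mult_left_mono[OF g1, of 4] by simp
  have eq: "2 * \<gamma>^2 * T^2 = 2 * (\<gamma> * T)^2" by (simp add: power_mult_distrib)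
  have g2: "2 * \<gamma>^2 * T^2 \<le> 4 * (exp (\<gamma> * T) - 1)" unfolding eq by (rule g2')
  have d: "4 * (1 - exp (\<gamma> * T)) * (x + 3 * T^3) \<le> - (2 * \<gamma>^2 * T^2) * (x + 3 * T^3)"
    using g2 assms c by (intro mult_right_mono) auto
  have d': "4 * (1 - exp (\<gamma> * T)) * (x + 3 * T^3) \<le> - (2 * \<gamma>^2 * T^2 * (x + 3 * T^3))"
    using d by (metis mult_minus_left)
  show ?thesis using a b d' by linarith
qed

lemma Q_alg:
  fixes x T l \<delta> \<gamma> c E G :: real
  assumes "x > 0" "T > 0" "\<delta> \<le> l" "3 * l \<le> 2 * \<gamma>^2" "\<gamma> > 0"
    and c_def: "c = T^3" and E_def: "E = exp T" and G_def: "G = exp (\<gamma> * T)"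
  shows "(- l * (8 * E) * x^2 / (x + c) + 3 * l * T^2 * (8 * E) * x^2 / (x + c)^2)
     - 16 * (x^2 * x) * (- (8 * E) / (4 * x * (x + c)^2) - (8 * E) * c / (2 * x * (x + c)^3))
     + \<delta> * ((8 * E) * x^2 / (x + c))
     - 2^5 * (G * E) * (x^2 * x + 3 * c * x^2) / (x + c)^3 \<le> 0"
proof -
  define y where "y = x + c"
  have cp: "c > 0" using assms by (simp add: c_def)
  have yp: "y > 0" using cp assms(1) unfolding y_def by linarith
  define F where "F = 8 * E * x^2 / y^3"
  have Fp: "F > 0" using yp assms by (simp add: F_def E_def)
  have ea: "- l * (8 * E) * x^2 / y = F * (- l * y^2)"
    using yp by (simp add: F_def field_simps power2_eq_square power3_eq_cube)
  have eb: "3 * l * T^2 * (8 * E) * x^2 / y^2 = F * (3 * l * T^2 * y)"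
    using yp by (simp add: F_def field_simps power2_eq_square power3_eq_cube)
  have ec: "- 16 * (x^2 * x) * (- (8 * E) / (4 * x * y^2) - (8 * E) * c / (2 * x * y^3)) = F * (4 * (x + 3 * c))"
  proof -
    have "- 16 * (x^2 * x) * (- (8 * E) / (4 * x * y^2) - (8 * E) * c / (2 * x * y^3)) = F * (4 * (y + 2 * c))"
      using yp assms(1) by (simp add: F_def field_simps power2_eq_square power3_eq_cube)
    moreover have "y + 2 * c = x + 3 * c" by (simp add: y_def)
    ultimately show ?thesis by simp
  qed
  have ed: "\<delta> * ((8 * E) * x^2 / y) = F * (\<delta> * y^2)"
    using yp by (simp add: F_def field_simps power2_eq_square power3_eq_cube)
  have ee: "2^5 * (G * E) * (x^2 * x + 3 * c * x^2) / y^3 = F * (4 * G * (x + 3 * c))"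
    using yp by (simp add: F_def field_simps power2_eq_square power3_eq_cube)
  have K: "(\<delta> - l) * y^2 + 3 * l * T^2 * y + 4 * (1 - G) * (x + 3 * c) \<le> 0"
    using K_neg[OF assms(1-5)] by (simp add: y_def c_def G_def)
  have "F * ((\<delta> - l) * y^2 + 3 * l * T^2 * y + 4 * (1 - G) * (x + 3 * c)) \<le> 0"
    using Fp K by (simp add: mult_nonneg_nonpos)
  moreover have "(- l * (8 * E) * x^2 / y + 3 * l * T^2 * (8 * E) * x^2 / y^2)
     - 16 * (x^2 * x) * (- (8 * E) / (4 * x * y^2) - (8 * E) * c / (2 * x * y^3))
     + \<delta> * ((8 * E) * x^2 / y)
     - 2^5 * (G * E) * (x^2 * x + 3 * c * x^2) / y^3
     = F * ((\<delta> - l) * y^2 + 3 * l * T^2 * y + 4 * (1 - G) * (x + 3 * c))"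
    using ea eb ec ed ee by (simp add: algebra_simps)
  ultimately show ?thesis by (simp add: y_def)
qed
lemma Wt_deriv:
  fixes e l s t :: real assumes "s > 0" "e - l * t > 0"
  shows "((\<lambda>t'. Wlow e l s t') has_real_derivative
     (- l * (8 * exp (e - l * t)) * s / (sqrt s + (e - l * t)^3)
      + 3 * l * (e - l * t)^2 * (8 * exp (e - l * t)) * s / (sqrt s + (e - l * t)^3)^2)) (at t)"
proof -
  have np: "sqrt s + (e - l * t)^3 \<noteq> 0" using assms
    by (metis add_pos_pos less_irrefl real_sqrt_gt_zero zero_less_power)
  show ?thesis
    unfolding Wlow_def bcoef_def tau_def using np
    apply (auto intro!: derivative_eq_intros)
    apply (simp add: divide_simps power2_eq_square)
    done
qed

theorem lemma3p6:
  fixes \<delta> m \<kappa> mus \<epsilon> l \<gamma> :: real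
  assumes "\<delta> > 0" and "m > 64 * pi^2" and "\<kappa> > 0" and "mus > 0"
    and "0 < \<epsilon>" and "\<epsilon> < 1" and "l > 0" and "\<gamma> > 0"
    and "l \<ge> \<delta>"
    and "\<forall>\<xi>::real. - (2^5) * \<xi>^2 + (mus * \<epsilon> + 6 * l) * \<xi> - (\<gamma> + 1) * l \<le> 0"
    and "2 * \<gamma>^2 - 3 * l \<ge> 0"
    and "exp \<epsilon> < (1 + 2 * \<kappa>) / (1 + \<kappa>)"
    and "exp ((\<gamma> + 1) * \<epsilon>) * (1 + 3 * \<epsilon>^3) < m / (64 * pi^2)"
    and "\<forall>t\<in>{0<..<\<epsilon>/l}. exp ((l - \<delta>) * t) * (1 + (\<epsilon> - l * t)^3) \<ge> 1 + \<epsilon>^3"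
  shows "(\<forall>t\<in>{0..<\<epsilon>/l}.
            (\<forall>s\<in>{0..1}. Wlow \<epsilon> l s t \<ge> 0)
          \<and> strict_mono_on {0..1} (\<lambda>s. Wlow \<epsilon> l s t)
          \<and> concave_on {0..1} (\<lambda>s. Wlow \<epsilon> l s t))
    \<and> (\<forall>t\<in>{0..<\<epsilon>/l}. Wlow \<epsilon> l 0 t = 0)
    \<and> (SUP t\<in>{0<..<\<epsilon>/l}. Wlow \<epsilon> l 1 t) < 8 * ((1 + 2 * \<kappa>) / (1 + \<kappa>))
    \<and> (\<forall>s\<in>{0<..<1}. \<forall>t\<in>{0<..<\<epsilon>/l}.
          Qop \<delta> (Ulow \<epsilon> l \<gamma>) (Wlow \<epsilon> l) s t \<le> 0)"
  proof -
  note A = assms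
  have tpos: "\<And>t. t < \<epsilon> / l \<Longrightarrow> tau \<epsilon> l t > 0"
  proof -
    fix t assume "t < \<epsilon> / l"
    then have "l * t < \<epsilon>" using A(7) by (simp add: field_simps mult.commute)
    then show "tau \<epsilon> l t > 0" by (simp add: tau_def)
  qed
  have P1: "\<forall>t\<in>{0..<\<epsilon>/l}.
            (\<forall>s\<in>{0..1}. Wlow \<epsilon> l s t \<ge> 0)
          \<and> strict_mono_on {0..1} (\<lambda>s. Wlow \<epsilon> l s t)
          \<and> concave_on {0..1} (\<lambda>s. Wlow \<epsilon> l s t)"
  proof
    fix t assume "t \<in> {0..<\<epsilon>/l}"
    then have "tau \<epsilon> l t > 0" using tpos by simp
    then have c: "tau \<epsilon> l t ^ 3 > 0" by simp
    have B: "bcoef \<epsilon> l t > 0" by (simp add: bcoef_def)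
    show "(\<forall>s\<in>{0..1}. Wlow \<epsilon> l s t \<ge> 0)
          \<and> strict_mono_on {0..1} (\<lambda>s. Wlow \<epsilon> l s t)
          \<and> concave_on {0..1} (\<lambda>s. Wlow \<epsilon> l s t)"
      unfolding Wlow_def by (rule W_shape[OF c B])
  qed
  have P2: "\<forall>t\<in>{0..<\<epsilon>/l}. Wlow \<epsilon> l 0 t = 0" by (simp add: Wlow_def)
  have P3: "(SUP t\<in>{0<..<\<epsilon>/l}. Wlow \<epsilon> l 1 t) < 8 * ((1 + 2 * \<kappa>) / (1 + \<kappa>))"
  proof -
    have ne: "{0<..<\<epsilon>/l} \<noteq> {}" using divide_pos_pos[OF A(5) A(7)] by simp
    have "(SUP t\<in>{0<..<\<epsilon>/l}. Wlow \<epsilon> l 1 t) \<le> 8 * exp \<epsilon>"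
    proof (rule cSUP_least[OF ne])
      fix t assume t: "t \<in> {0<..<\<epsilon>/l}"
      then have T: "tau \<epsilon> l t > 0" using tpos by simp
      have "tau \<epsilon> l t \<le> \<epsilon>" using t A(7) by (simp add: tau_def)
      then have e: "exp (tau \<epsilon> l t) \<le> exp \<epsilon>" by simp
      have "Wlow \<epsilon> l 1 t = 8 * exp (tau \<epsilon> l t) / (1 + tau \<epsilon> l t ^ 3)"
        by (simp add: Wlow_def bcoef_def)
      also have "\<dots> \<le> 8 * exp (tau \<epsilon> l t)"
      proof -
        have "0 < tau \<epsilon> l t ^ 3" using T by simp
        then have "0 < 1 + tau \<epsilon> l t ^ 3" by linarith
        then show ?thesis
          using divide_left_mono[of 1 "1 + tau \<epsilon> l t ^ 3" "8 * exp (tau \<epsilon> l t)"] T by simp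
      qed
      also have "\<dots> \<le> 8 * exp \<epsilon>" using e by simp
      finally show "Wlow \<epsilon> l 1 t \<le> 8 * exp \<epsilon>" .
    qed
    also have "\<dots> < 8 * ((1 + 2 * \<kappa>) / (1 + \<kappa>))" using A(12) by (simp only: mult_less_cancel_left_pos[of 8] zero_less_numeral)
    finally show ?thesis .
  qed
  have P4: "\<forall>s\<in>{0<..<1}. \<forall>t\<in>{0<..<\<epsilon>/l}.
          Qop \<delta> (Ulow \<epsilon> l \<gamma>) (Wlow \<epsilon> l) s t \<le> 0"
  proof (intro ballI)
    fix s t :: real assume s: "s \<in> {0<..<1}" and t: "t \<in> {0<..<\<epsilon>/l}"
    have Tp: "tau \<epsilon> l t > 0" using t tpos by simp
    define T where "T = tau \<epsilon> l t"
    define x where "x = sqrt s"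
    have xp: "x > 0" using s by (simp add: x_def)
    have sx: "s = x^2" using s by (simp add: x_def)
    have pw: "s powr (3/2) = x^2 * x"
    proof -
      have e: "(3/2::real) = 1 + 1/2" by simp
      have "s powr (3/2) = s powr 1 * s powr (1/2)" unfolding e by (rule powr_add)
      also have "\<dots> = s * sqrt s" using s by (simp add: powr_half_sqrt)
      finally show ?thesis by (simp only: x_def[symmetric] sx[symmetric])
    qed
    have c: "tau \<epsilon> l t ^ 3 > 0" using Tp by simp
    have d1: "deriv (\<lambda>t'. Wlow \<epsilon> l s t') t =
       - l * (8 * exp (\<epsilon> - l * t)) * s / (sqrt s + (\<epsilon> - l * t)^3)
      + 3 * l * (\<epsilon> - l * t)^2 * (8 * exp (\<epsilon> - l * t)) * s / (sqrt s + (\<epsilon> - l * t)^3)^2"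
      using Tp s by (intro DERIV_imp_deriv Wt_deriv) (auto simp: tau_def)
    have d2: "deriv (deriv (\<lambda>s'. Wlow \<epsilon> l s' t)) s = W2f (bcoef \<epsilon> l t) (tau \<epsilon> l t ^ 3) s"
      unfolding Wlow_def using c s by (intro deriv2_W) auto
    have ex: "exp ((\<gamma> + 1) * T) = exp (\<gamma> * T) * exp T"
      by (simp add: distrib_right exp_add)
    have "Qop \<delta> (Ulow \<epsilon> l \<gamma>) (Wlow \<epsilon> l) s t =
      (- l * (8 * exp T) * x^2 / (x + T^3) + 3 * l * T^2 * (8 * exp T) * x^2 / (x + T^3)^2)
     - 16 * (x^2 * x) * (- (8 * exp T) / (4 * x * (x + T^3)^2) - (8 * exp T) * T^3 / (2 * x * (x + T^3)^3))
     + \<delta> * ((8 * exp T) * x^2 / (x + T^3))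
     - 2^5 * (exp (\<gamma> * T) * exp T) * (x^2 * x + 3 * T^3 * x^2) / (x + T^3)^3"
      unfolding Qop_def d1 d2 pw
      unfolding Ulow_def Wlow_def acoef_def bcoef_def W2f_def ex[unfolded T_def, symmetric] pw
      unfolding T_def[symmetric] tau_def[of \<epsilon> l t, symmetric] x_def[symmetric]
      unfolding sx ex ..
    also have "\<dots> \<le> 0"
      using A by (intro Q_alg[OF xp _ _ _ _ refl refl refl]) (auto simp: T_def Tp)
    finally show "Qop \<delta> (Ulow \<epsilon> l \<gamma>) (Wlow \<epsilon> l) s t \<le> 0" .
  qed
  show ?thesis using P1 P2 P3 P4 by blast
qed

end
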